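(* Let $(F_n)_{n\ge 0}$ be the Fibonacci sequence with $F_0=0$, $F_1=1$, $F_n=F_{n-1}+F_{n-2}$ for $n\ge2$. For every integer $k\in\mathbb{Z}$ (possibly negative) and every integer $m\ge 0$, $$[\underbrace{4,4,\dots,4}_{m},\,2k+3]=\frac{F_{3m+4}+k\,F_{3m+3}}{F_{3m+1}+k\,F_{3m}},$$ where the continued fraction has $m+1$ entries $a_0,\dots,a_m$ with $a_i=4$ for $0\le i<m$ and $a_m=2k+3$.
   Context: For numbers $a_0,a_1,\dots,a_m$, the finite continued fraction $[a_0,a_1,\dots,a_m]$ denotes $a_0+\cfrac{1}{a_1+\cfrac{1}{\ddots+\cfrac{1}{a_m}}}$, evaluated as a rational number; $[a_0]=a_0$. *)

theory Defs
  imports Main "HOL-Number_Theory.Fib"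
begin

text \<open>Finite continued fraction [a0,...,am] evaluated in the rationals; [a0] = a0.
  The empty list is never used (value 0 by convention).\<close>
fun cfrac :: "rat list \<Rightarrow> rat" where
  "cfrac [] = 0"
| "cfrac [a] = a"
| "cfrac (a # b # cs) = a + 1 / cfrac (b # cs)"

end

theory Submission
  imports Defs
begin

lemma cfrac_cons: "xs \<noteq> [] \<Longrightarrow> cfrac (a # xs) = a + 1 / cfrac xs"
  by (cases xs) auto

lemma fib_bounds: "fib (3*m+3) < fib (3*m+4) \<and> fib (3*m+4) < 2 * fib (3*m+3)"
proof -
  have a: "fib (3*m+4) = fib (3*m+3) + fib (3*m+2)"
    by (simp add: numeral_eq_Suc)
  have b: "fib (3*m+3) = fib (3*m+2) + fib (3*m+1)"
    by (simp add: numeral_eq_Suc)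
  have c: "fib (3*m+2) > 0" by (simp add: fib_neq_0_nat)
  have d: "fib (3*m+1) > 0" by (simp add: fib_neq_0_nat)
  have e: "fib (3*m+2) = fib (3*m+1) + fib (3*m)" by (simp add: numeral_eq_Suc)
  have "fib (3*m) < fib (3*m+2) \<or> True" by simp
  have f: "fib (3*m+2) < fib (3*m+3)" using b d by simp
  show ?thesis using a b c f by simp
qed

lemma nz: fixes a b k :: int assumes "b < a" "a < 2*b" shows "a + k*b \<noteq> 0"
proof (cases "k \<ge> -1")
  case True
  then have "(k+1)*b \<ge> 0" using assms by simp
  then have "k*b \<ge> -b" by (simp add: algebra_simps)
  then show ?thesis using assms by linarith
next
  case False
  then have "k*b \<le> -2*b" using assms
    by (intro mult_right_mono) auto
  then show ?thesis using assms by linarith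
qed

lemma N_nz: "(of_nat (fib (3 * m + 4)) + of_int k * of_nat (fib (3 * m + 3)) :: rat) \<noteq> 0"
proof -
  have "int (fib (3*m+4)) + k * int (fib (3*m+3)) \<noteq> 0"
    using fib_bounds[of m] by (intro nz) auto
  then have "(of_int (int (fib (3*m+4)) + k * int (fib (3*m+3))) :: rat) \<noteq> 0"
    by (simp only: of_int_eq_0_iff) simp
  moreover have "(of_int (int (fib (3*m+4)) + k * int (fib (3*m+3))) :: rat)
     = of_nat (fib (3 * m + 4)) + of_int k * of_nat (fib (3 * m + 3))" by simp
  ultimately show ?thesis by simp
qed

lemma rec1: "fib (3*m+7) = 4 * fib (3*m+4) + fib (3*m+1)"
  by (simp add: numeral_eq_Suc)

lemma rec2: "fib (3*m+6) = 4 * fib (3*m+3) + fib (3*m)"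
  by (simp add: numeral_eq_Suc)

theorem corollary2:
  fixes k :: int and m :: nat
  shows "cfrac (replicate m 4 @ [of_int (2 * k + 3)]) =
    (of_nat (fib (3 * m + 4)) + of_int k * of_nat (fib (3 * m + 3))) /
    (of_nat (fib (3 * m + 1)) + of_int k * of_nat (fib (3 * m)))"
proof (induction m)
  case 0
  then show ?case by (simp add: numeral_eq_Suc)
next
  case (Suc m)
  let ?N = "(of_nat (fib (3 * m + 4)) + of_int k * of_nat (fib (3 * m + 3)) :: rat)"
  let ?D = "(of_nat (fib (3 * m + 1)) + of_int k * of_nat (fib (3 * m)) :: rat)"
  have Dnz: "?D \<noteq> 0"
  proof (cases m)
    case 0 then show ?thesis by simp
  next
    case (Suc j)
    have "3*m+1 = 3*j+4" "3*m = 3*j+3" using Suc by auto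
    then show ?thesis using N_nz[of j k] by (simp only:) simp
  qed
  have "cfrac (replicate (Suc m) 4 @ [of_int (2 * k + 3)]) = 4 + 1 / (?N / ?D)"
    using Suc.IH by (simp add: cfrac_cons)
  also have "\<dots> = (4 * ?N + ?D) / ?N" using N_nz[of m k] Dnz by (simp add: field_simps)
  also have "4 * ?N + ?D = of_nat (fib (3 * Suc m + 4)) + of_int k * of_nat (fib (3 * Suc m + 3))"
    using rec1[of m] rec2[of m] by (simp add: algebra_simps)
  also have "?N = of_nat (fib (3 * Suc m + 1)) + of_int k * of_nat (fib (3 * Suc m))"
    by (simp add: add.commute)
  finally show ?case .
qed

end
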